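(* Every eaco is an existential doctrine.
   Context: A doctrine is a pair $(\mathcal{C},P)$, $\mathcal{C}$ a category with finite products, $P:\mathcal{C}^{op}\to\mathbf{Pos}$ a functor, $f^*=P(f)$; primary: each $P(A)$ has binary meets $\wedge$ preserved by each $f^*$. Elementary: primary and for every $A$ there is $\delta_A\in P(A\times A)$ such that for every $X$ the assignment $\psi\mapsto\langle\pi_1,\pi_2\rangle^*\psi\wedge\langle\pi_2,\pi_3\rangle^*\delta_A$ ($\pi_i$ the projections of $X\times A\times A$) is a left adjoint $P(X\times A)\to P(X\times A\times A)$ to $(id_X\times\Delta_A)^*$. Graph of $f:X\to A$: $\mathcal{G}(f)=(f\times id_A)^*\delta_A\in P(X\times A)$. Stable initial object: initial $0$ with $X\times0\cong0$ for all $X$. AC: for every $A$ not a stable initial object and every $\Gamma$, $\pi_\Gamma^*$ ($\pi_\Gamma:\Gamma\times A\to\Gamma$) has a left adjoint $\Sigma_{\pi_\Gamma}$ and for every $\psi\in P(\Gamma\times A)$ there is a chosen $\epsilon_\psi:\Gamma\to A$ with $\Sigma_{\pi_\Gamma}\psi=\langle id_\Gamma,\epsilon_\psi\rangle^*\psi$ (also used with factors swapped). Co-comprehension: every $P(A)$ has a bottom and for each $\alpha$ there is $\lceil\alpha\rceil:\{\alpha\}^o\to A$ with $\lceil\alpha\rceil^*\alpha=\bot$, universal (unique factorization) among $f$ with $f^*\alpha=\bot$; full if $\lceil\beta\rceil$ factoring through $\lceil\alpha\rceil$ implies $\alpha\le\beta$. An eaco is an elementary doctrine with full co-comprehension satisfying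 AC such that for every $f:X\to A$ and $\alpha\in P(A)$: $f^*\langle\epsilon_{\mathcal{G}(\lceil\alpha\rceil)},id_A\rangle^*\mathcal{G}(\lceil\alpha\rceil)=\langle\epsilon_{\mathcal{G}(\lceil f^*\alpha\rceil)},id_X\rangle^*\mathcal{G}(\lceil f^*\alpha\rceil)$ (with $\epsilon_{\mathcal{G}(\lceil\alpha\rceil)}:A\to\{\alpha\}^o$ the AC witness for the projection $\{\alpha\}^o\times A\to A$). Existential: for every product projection $f$, $f^*$ has a left adjoint $\Sigma_f$ satisfying Beck–Chevalley ($h^*\Sigma_f\gamma=\Sigma_gk^*\gamma$ for every pullback square $h\circ g=f\circ k$) and Frobenius reciprocity $\Sigma_f(\alpha\wedge f^*\beta)=\beta\wedge\Sigma_f\alpha$. *)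

theory Defs
  imports Main
begin

text \<open>Arrows carry domain and codomain; cmp g f is the composite g o f.\<close>
record ('o,'m) cat =
  Ob  :: "'o set"
  Ar  :: "'m set"
  dom :: "'m \<Rightarrow> 'o"
  cod :: "'m \<Rightarrow> 'o"
  idm :: "'o \<Rightarrow> 'm"
  cmp :: "'m \<Rightarrow> 'm \<Rightarrow> 'm"

record ('o,'m) pcat = "('o,'m) cat" +
  prd  :: "'o \<Rightarrow> 'o \<Rightarrow> 'o"
  pr1  :: "'o \<Rightarrow> 'o \<Rightarrow> 'm"
  pr2  :: "'o \<Rightarrow> 'o \<Rightarrow> 'm"
  tup  :: "'m \<Rightarrow> 'm \<Rightarrow> 'm"
  trm  :: "'o"
  bang :: "'o \<Rightarrow> 'm"

text \<open>A doctrine: a category with finite products plus a functor P : C^op -> Pos,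
  given by carriers Pc A, orders le A and reindexing rei f = f^*.\<close>
record ('o,'m,'p) doctrine = "('o,'m) pcat" +
  Pc  :: "'o \<Rightarrow> 'p set"
  le  :: "'o \<Rightarrow> 'p \<Rightarrow> 'p \<Rightarrow> bool"
  rei :: "'m \<Rightarrow> 'p \<Rightarrow> 'p"

definition hom :: "('o,'m,'z) cat_scheme \<Rightarrow> 'o \<Rightarrow> 'o \<Rightarrow> 'm set" where
  "hom C X Y = {f \<in> Ar C. dom C f = X \<and> cod C f = Y}"

definition category :: "('o,'m,'z) cat_scheme \<Rightarrow> bool" where
  "category C \<longleftrightarrow>
     (\<forall>f\<in>Ar C. dom C f \<in> Ob C \<and> cod C f \<in> Ob C) \<and>
     (\<forall>X\<in>Ob C. idm C X \<in> hom C X X) \<and>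
     (\<forall>f\<in>Ar C. \<forall>g\<in>Ar C. cod C f = dom C g \<longrightarrow> cmp C g f \<in> hom C (dom C f) (cod C g)) \<and>
     (\<forall>f\<in>Ar C. cmp C (idm C (cod C f)) f = f \<and> cmp C f (idm C (dom C f)) = f) \<and>
     (\<forall>f\<in>Ar C. \<forall>g\<in>Ar C. \<forall>h\<in>Ar C. cod C f = dom C g \<longrightarrow> cod C g = dom C h \<longrightarrow>
         cmp C h (cmp C g f) = cmp C (cmp C h g) f)"

definition has_finite_products :: "('o,'m,'z) pcat_scheme \<Rightarrow> bool" where
  "has_finite_products C \<longleftrightarrow> category C \<and>
     trm C \<in> Ob C \<and>
     (\<forall>X\<in>Ob C. bang C X \<in> hom C X (trm C) \<and> (\<forall>f\<in>hom C X (trm C). f = bang C X)) \<and>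
     (\<forall>A\<in>Ob C. \<forall>B\<in>Ob C. prd C A B \<in> Ob C \<and>
        pr1 C A B \<in> hom C (prd C A B) A \<and> pr2 C A B \<in> hom C (prd C A B) B \<and>
        (\<forall>Z\<in>Ob C. \<forall>f\<in>hom C Z A. \<forall>g\<in>hom C Z B.
            tup C f g \<in> hom C Z (prd C A B) \<and>
            cmp C (pr1 C A B) (tup C f g) = f \<and> cmp C (pr2 C A B) (tup C f g) = g \<and>
            (\<forall>h\<in>hom C Z (prd C A B). cmp C (pr1 C A B) h = f \<and> cmp C (pr2 C A B) h = g
                 \<longrightarrow> h = tup C f g)))"

definition iso_objs :: "('o,'m,'z) cat_scheme \<Rightarrow> 'o \<Rightarrow> 'o \<Rightarrow> bool" where
  "iso_objs C X Y \<longleftrightarrow> (\<exists>f\<in>hom C X Y. \<exists>g\<in>hom C Y X. cmp C g f = idm C X \<and> cmp C f g = idm C Y)"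

definition stable_initial :: "('o,'m,'z) pcat_scheme \<Rightarrow> 'o \<Rightarrow> bool" where
  "stable_initial C Z \<longleftrightarrow> Z \<in> Ob C \<and> (\<forall>X\<in>Ob C. \<exists>!u. u \<in> hom C Z X) \<and>
     (\<forall>X\<in>Ob C. iso_objs C (prd C X Z) Z)"

definition is_pullback :: "('o,'m,'z) cat_scheme \<Rightarrow> 'm \<Rightarrow> 'm \<Rightarrow> 'm \<Rightarrow> 'm \<Rightarrow> bool" where
  \<comment> \<open>the square  h o g = f o k  with g : W -> X, k : W -> Z, h : X -> Y, f : Z -> Y is a pullback\<close>
  "is_pullback C h g f k \<longleftrightarrow> h \<in> Ar C \<and> g \<in> Ar C \<and> f \<in> Ar C \<and> k \<in> Ar C \<and>
     dom C h = cod C g \<and> dom C f = cod C k \<and> dom C g = dom C k \<and> cod C h = cod C f \<and>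
     cmp C h g = cmp C f k \<and>
     (\<forall>V\<in>Ob C. \<forall>u\<in>hom C V (cod C g). \<forall>v\<in>hom C V (cod C k). cmp C h u = cmp C f v \<longrightarrow>
        (\<exists>!w. w \<in> hom C V (dom C g) \<and> cmp C g w = u \<and> cmp C k w = v))"

definition doctrine :: "('o,'m,'p,'z) doctrine_scheme \<Rightarrow> bool" where
  "doctrine D \<longleftrightarrow> has_finite_products D \<and>
     (\<forall>A\<in>Ob D. (\<forall>\<alpha>\<in>Pc D A. le D A \<alpha> \<alpha>) \<and>
        (\<forall>\<alpha>\<in>Pc D A. \<forall>\<beta>\<in>Pc D A. le D A \<alpha> \<beta> \<and> le D A \<beta> \<alpha> \<longrightarrow> \<alpha> = \<beta>) \<and>
        (\<forall>\<alpha>\<in>Pc D A. \<forall>\<beta>\<in>Pc D A. \<forall>\<gamma>\<in>Pc D A. le D A \<alpha> \<beta> \<and> le D A \<beta> \<gamma> \<longrightarrow> le D A \<alpha> \<gamma>)) \<and>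
     (\<forall>f\<in>Ar D. (\<forall>\<alpha>\<in>Pc D (cod D f). rei D f \<alpha> \<in> Pc D (dom D f)) \<and>
        (\<forall>\<alpha>\<in>Pc D (cod D f). \<forall>\<beta>\<in>Pc D (cod D f).
            le D (cod D f) \<alpha> \<beta> \<longrightarrow> le D (dom D f) (rei D f \<alpha>) (rei D f \<beta>))) \<and>
     (\<forall>A\<in>Ob D. \<forall>\<alpha>\<in>Pc D A. rei D (idm D A) \<alpha> = \<alpha>) \<and>
     (\<forall>f\<in>Ar D. \<forall>g\<in>Ar D. cod D f = dom D g \<longrightarrow>
        (\<forall>\<alpha>\<in>Pc D (cod D g). rei D (cmp D g f) \<alpha> = rei D f (rei D g \<alpha>)))"

definition primary_with :: "('o,'m,'p,'z) doctrine_scheme \<Rightarrow> ('o \<Rightarrow> 'p \<Rightarrow> 'p \<Rightarrow> 'p) \<Rightarrow> bool" where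
  "primary_with D mt \<longleftrightarrow> doctrine D \<and>
     (\<forall>A\<in>Ob D. \<forall>\<alpha>\<in>Pc D A. \<forall>\<beta>\<in>Pc D A. mt A \<alpha> \<beta> \<in> Pc D A \<and>
        le D A (mt A \<alpha> \<beta>) \<alpha> \<and> le D A (mt A \<alpha> \<beta>) \<beta> \<and>
        (\<forall>\<gamma>\<in>Pc D A. le D A \<gamma> \<alpha> \<and> le D A \<gamma> \<beta> \<longrightarrow> le D A \<gamma> (mt A \<alpha> \<beta>))) \<and>
     (\<forall>f\<in>Ar D. \<forall>\<alpha>\<in>Pc D (cod D f). \<forall>\<beta>\<in>Pc D (cod D f).
        rei D f (mt (cod D f) \<alpha> \<beta>) = mt (dom D f) (rei D f \<alpha>) (rei D f \<beta>))"

text \<open>Elementary doctrine, with dl A = delta_A; X x A x A is read as X x (A x A).\<close>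
definition elementary_with ::
  "('o,'m,'p,'z) doctrine_scheme \<Rightarrow> ('o \<Rightarrow> 'p \<Rightarrow> 'p \<Rightarrow> 'p) \<Rightarrow> ('o \<Rightarrow> 'p) \<Rightarrow> bool" where
  "elementary_with D mt dl \<longleftrightarrow> primary_with D mt \<and>
     (\<forall>A\<in>Ob D. dl A \<in> Pc D (prd D A A) \<and>
       (\<forall>X\<in>Ob D.
          let XAA = prd D X (prd D A A);
              p1 = pr1 D X (prd D A A);
              p2 = cmp D (pr1 D A A) (pr2 D X (prd D A A));
              p3 = cmp D (pr2 D A A) (pr2 D X (prd D A A));
              idD = tup D (cmp D (idm D X) (pr1 D X A))
                          (cmp D (tup D (idm D A) (idm D A)) (pr2 D X A))
          in \<forall>\<psi>\<in>Pc D (prd D X A). \<forall>\<phi>\<in>Pc D XAA.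
               le D XAA (mt XAA (rei D (tup D p1 p2) \<psi>) (rei D (tup D p2 p3) (dl A))) \<phi>
                 \<longleftrightarrow> le D (prd D X A) \<psi> (rei D idD \<phi>)))"

definition graph :: "('o,'m,'p,'z) doctrine_scheme \<Rightarrow> ('o \<Rightarrow> 'p) \<Rightarrow> 'm \<Rightarrow> 'p" where
  "graph D dl f = rei D (tup D (cmp D f (pr1 D (dom D f) (cod D f)))
                               (cmp D (idm D (cod D f)) (pr2 D (dom D f) (cod D f)))) (dl (cod D f))"

definition left_adjoint :: "('o,'m,'p,'z) doctrine_scheme \<Rightarrow> 'm \<Rightarrow> ('p \<Rightarrow> 'p) \<Rightarrow> bool" where
  "left_adjoint D f L \<longleftrightarrow> (\<forall>\<alpha>\<in>Pc D (dom D f). L \<alpha> \<in> Pc D (cod D f) \<and>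
     (\<forall>\<beta>\<in>Pc D (cod D f). le D (cod D f) (L \<alpha>) \<beta> \<longleftrightarrow> le D (dom D f) \<alpha> (rei D f \<beta>)))"

definition AC_with :: "('o,'m,'p,'z) doctrine_scheme \<Rightarrow>
   ('o \<Rightarrow> 'o \<Rightarrow> 'p \<Rightarrow> 'p) \<Rightarrow> ('o \<Rightarrow> 'o \<Rightarrow> 'p \<Rightarrow> 'p) \<Rightarrow>
   ('o \<Rightarrow> 'o \<Rightarrow> 'p \<Rightarrow> 'm) \<Rightarrow> ('o \<Rightarrow> 'o \<Rightarrow> 'p \<Rightarrow> 'm) \<Rightarrow> bool" where
  "AC_with D Sg1 Sg2 e1 e2 \<longleftrightarrow>
     (\<forall>A\<in>Ob D. \<not> stable_initial D A \<longrightarrow> (\<forall>\<Gamma>\<in>Ob D.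
        left_adjoint D (pr1 D \<Gamma> A) (Sg1 \<Gamma> A) \<and>
        (\<forall>\<psi>\<in>Pc D (prd D \<Gamma> A). e1 \<Gamma> A \<psi> \<in> hom D \<Gamma> A \<and>
            Sg1 \<Gamma> A \<psi> = rei D (tup D (idm D \<Gamma>) (e1 \<Gamma> A \<psi>)) \<psi>) \<and>
        left_adjoint D (pr2 D A \<Gamma>) (Sg2 A \<Gamma>) \<and>
        (\<forall>\<psi>\<in>Pc D (prd D A \<Gamma>). e2 A \<Gamma> \<psi> \<in> hom D \<Gamma> A \<and>
            Sg2 A \<Gamma> \<psi> = rei D (tup D (e2 A \<Gamma> \<psi>) (idm D \<Gamma>)) \<psi>)))"

text \<open>Co-comprehension: bt A bottom of P(A), co A alpha = {alpha}^o, cc A alpha = ceil alpha.\<close>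
definition cocomp_with :: "('o,'m,'p,'z) doctrine_scheme \<Rightarrow> ('o \<Rightarrow> 'p) \<Rightarrow>
   ('o \<Rightarrow> 'p \<Rightarrow> 'o) \<Rightarrow> ('o \<Rightarrow> 'p \<Rightarrow> 'm) \<Rightarrow> bool" where
  "cocomp_with D bt co cc \<longleftrightarrow>
     (\<forall>A\<in>Ob D. bt A \<in> Pc D A \<and> (\<forall>\<alpha>\<in>Pc D A. le D A (bt A) \<alpha>)) \<and>
     (\<forall>A\<in>Ob D. \<forall>\<alpha>\<in>Pc D A. co A \<alpha> \<in> Ob D \<and> cc A \<alpha> \<in> hom D (co A \<alpha>) A \<and>
        rei D (cc A \<alpha>) \<alpha> = bt (co A \<alpha>) \<and>
        (\<forall>Y\<in>Ob D. \<forall>f\<in>hom D Y A. rei D f \<alpha> = bt Y \<longrightarrow>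
            (\<exists>!g. g \<in> hom D Y (co A \<alpha>) \<and> cmp D (cc A \<alpha>) g = f)))"

definition full_cocomp :: "('o,'m,'p,'z) doctrine_scheme \<Rightarrow>
   ('o \<Rightarrow> 'p \<Rightarrow> 'o) \<Rightarrow> ('o \<Rightarrow> 'p \<Rightarrow> 'm) \<Rightarrow> bool" where
  "full_cocomp D co cc \<longleftrightarrow> (\<forall>A\<in>Ob D. \<forall>\<alpha>\<in>Pc D A. \<forall>\<beta>\<in>Pc D A.
     (\<exists>g\<in>hom D (co A \<beta>) (co A \<alpha>). cmp D (cc A \<alpha>) g = cc A \<beta>) \<longrightarrow> le D A \<alpha> \<beta>)"

definition eaco :: "('o,'m,'p,'z) doctrine_scheme \<Rightarrow> bool" where
  "eaco D \<longleftrightarrow> (\<exists>mt dl bt co cc Sg1 Sg2 e1 e2.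
     elementary_with D mt dl \<and> cocomp_with D bt co cc \<and> full_cocomp D co cc \<and>
     AC_with D Sg1 Sg2 e1 e2 \<and>
     (\<forall>X\<in>Ob D. \<forall>A\<in>Ob D. \<forall>f\<in>hom D X A. \<forall>\<alpha>\<in>Pc D A.
        let O1 = co A \<alpha>; c1 = cc A \<alpha>;
            O2 = co X (rei D f \<alpha>); c2 = cc X (rei D f \<alpha>)
        in \<not> stable_initial D O1 \<and> \<not> stable_initial D O2 \<longrightarrow>
           rei D f (rei D (tup D (e2 O1 A (graph D dl c1)) (idm D A)) (graph D dl c1))
             = rei D (tup D (e2 O2 X (graph D dl c2)) (idm D X)) (graph D dl c2)))"

definition is_proj :: "('o,'m,'z) pcat_scheme \<Rightarrow> 'm \<Rightarrow> bool" where
  "is_proj C f \<longleftrightarrow> (\<exists>A\<in>Ob C. \<exists>B\<in>Ob C. f = pr1 C A B \<or> f = pr2 C A B)"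

definition existential :: "('o,'m,'p,'z) doctrine_scheme \<Rightarrow> bool" where
  "existential D \<longleftrightarrow> (\<exists>mt Sg. primary_with D mt \<and>
     (\<forall>f. is_proj D f \<longrightarrow> left_adjoint D f (Sg f)) \<and>
     (\<forall>f g h k. is_proj D f \<and> is_proj D g \<and> is_pullback D h g f k \<longrightarrow>
        (\<forall>\<gamma>\<in>Pc D (dom D f). rei D h (Sg f \<gamma>) = Sg g (rei D k \<gamma>))) \<and>
     (\<forall>f. is_proj D f \<longrightarrow> (\<forall>\<alpha>\<in>Pc D (dom D f). \<forall>\<beta>\<in>Pc D (cod D f).
        Sg f (mt (dom D f) \<alpha> (rei D f \<beta>)) = mt (cod D f) \<beta> (Sg f \<alpha>))))"

end

theory Submission
  imports Defs
begin

locale fp = fixes D :: "('o,'m,'p,'z) doctrine_scheme"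
  assumes fp: "has_finite_products D"
begin

lemma cat: "category D" using fp by (simp add: has_finite_products_def)

lemma hom_Ar: "f \<in> hom D X Y \<Longrightarrow> f \<in> Ar D" by (simp add: hom_def)
lemma homI: "f \<in> Ar D \<Longrightarrow> dom D f = X \<Longrightarrow> cod D f = Y \<Longrightarrow> f \<in> hom D X Y" by (simp add: hom_def)
lemma hom_dom: "f \<in> hom D X Y \<Longrightarrow> dom D f = X" by (simp add: hom_def)
lemma hom_cod: "f \<in> hom D X Y \<Longrightarrow> cod D f = Y" by (simp add: hom_def)
lemma hom_ObX: "f \<in> hom D X Y \<Longrightarrow> X \<in> Ob D" using cat by (auto simp: category_def hom_def)
lemma hom_ObY: "f \<in> hom D X Y \<Longrightarrow> Y \<in> Ob D" using cat by (auto simp: category_def hom_def)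
lemma id_hom: "X \<in> Ob D \<Longrightarrow> idm D X \<in> hom D X X" using cat by (auto simp: category_def)
lemma comp_hom: "f \<in> hom D X Y \<Longrightarrow> g \<in> hom D Y Z \<Longrightarrow> cmp D g f \<in> hom D X Z"
  using cat unfolding category_def hom_def by auto
lemma id_l: "f \<in> hom D X Y \<Longrightarrow> cmp D (idm D Y) f = f"
  using cat unfolding category_def hom_def by auto
lemma id_r: "f \<in> hom D X Y \<Longrightarrow> cmp D f (idm D X) = f"
  using cat unfolding category_def hom_def by auto
lemma assoc: "f \<in> hom D X Y \<Longrightarrow> g \<in> hom D Y Z \<Longrightarrow> h \<in> hom D Z W \<Longrightarrow>
   cmp D h (cmp D g f) = cmp D (cmp D h g) f"
  using cat unfolding category_def hom_def by auto

lemma trm: "trm D \<in> Ob D" using fp by (simp add: has_finite_products_def)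
lemma prd_Ob: "A \<in> Ob D \<Longrightarrow> B \<in> Ob D \<Longrightarrow> prd D A B \<in> Ob D"
  using fp by (simp add: has_finite_products_def)
lemma pr1_hom: "A \<in> Ob D \<Longrightarrow> B \<in> Ob D \<Longrightarrow> pr1 D A B \<in> hom D (prd D A B) A"
  using fp by (simp add: has_finite_products_def)
lemma pr2_hom: "A \<in> Ob D \<Longrightarrow> B \<in> Ob D \<Longrightarrow> pr2 D A B \<in> hom D (prd D A B) B"
  using fp by (simp add: has_finite_products_def)
lemma tup_hom: "f \<in> hom D Z A \<Longrightarrow> g \<in> hom D Z B \<Longrightarrow> tup D f g \<in> hom D Z (prd D A B)"
  using fp hom_ObX[of f Z A] hom_ObY[of f Z A] hom_ObY[of g Z B] by (simp add: has_finite_products_def)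
lemma pr1_tup: "f \<in> hom D Z A \<Longrightarrow> g \<in> hom D Z B \<Longrightarrow> cmp D (pr1 D A B) (tup D f g) = f"
  using fp hom_ObX[of f Z A] hom_ObY[of f Z A] hom_ObY[of g Z B] by (simp add: has_finite_products_def)
lemma pr2_tup: "f \<in> hom D Z A \<Longrightarrow> g \<in> hom D Z B \<Longrightarrow> cmp D (pr2 D A B) (tup D f g) = g"
  using fp hom_ObX[of f Z A] hom_ObY[of f Z A] hom_ObY[of g Z B] by (simp add: has_finite_products_def)
lemma tup_uniq: "f \<in> hom D Z A \<Longrightarrow> g \<in> hom D Z B \<Longrightarrow> h \<in> hom D Z (prd D A B) \<Longrightarrow>
   cmp D (pr1 D A B) h = f \<Longrightarrow> cmp D (pr2 D A B) h = g \<Longrightarrow> h = tup D f g"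
  using fp hom_ObX[of f Z A] hom_ObY[of f Z A] hom_ObY[of g Z B] by (simp add: has_finite_products_def)

lemma tup_comp: assumes f: "f \<in> hom D Z A" and g: "g \<in> hom D Z B" and h: "h \<in> hom D V Z"
  shows "cmp D (tup D f g) h = tup D (cmp D f h) (cmp D g h)"
proof -
  have A: "A \<in> Ob D" "B \<in> Ob D" using f g hom_ObY by auto
  have t: "tup D f g \<in> hom D Z (prd D A B)" using f g by (rule tup_hom)
  have 1: "cmp D (pr1 D A B) (cmp D (tup D f g) h) = cmp D f h"
    using assoc[OF h t pr1_hom[OF A]] pr1_tup[OF f g] by simp
  have 2: "cmp D (pr2 D A B) (cmp D (tup D f g) h) = cmp D g h"
    using assoc[OF h t pr2_hom[OF A]] pr2_tup[OF f g] by simp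
  show ?thesis
    by (rule tup_uniq[OF comp_hom[OF h f] comp_hom[OF h g] comp_hom[OF h t] 1 2])
qed

lemma idm_comp_pr: "f \<in> hom D X Y \<Longrightarrow> cmp D (idm D Y) f = f" by (rule id_l)

end

locale eac = fp D for D :: "('o,'m,'p,'z) doctrine_scheme" +
  fixes mt dl bt co cc Sg1 Sg2 e1 e2
  assumes el: "elementary_with D mt dl" and ccw: "cocomp_with D bt co cc"
    and full: "full_cocomp D co cc" and ac: "AC_with D Sg1 Sg2 e1 e2"
    and ec: "\<forall>X\<in>Ob D. \<forall>A\<in>Ob D. \<forall>f\<in>hom D X A. \<forall>\<alpha>\<in>Pc D A.
        let O1 = co A \<alpha>; c1 = cc A \<alpha>;
            O2 = co X (rei D f \<alpha>); c2 = cc X (rei D f \<alpha>)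
        in \<not> stable_initial D O1 \<and> \<not> stable_initial D O2 \<longrightarrow>
           rei D f (rei D (tup D (e2 O1 A (graph D dl c1)) (idm D A)) (graph D dl c1))
             = rei D (tup D (e2 O2 X (graph D dl c2)) (idm D X)) (graph D dl c2)"
begin

lemma prim: "primary_with D mt" using el by (simp add: elementary_with_def)
lemma doc: "doctrine D" using prim by (simp add: primary_with_def)

lemmas dc1 = doc[unfolded doctrine_def, THEN conjunct2, THEN conjunct1]
lemmas dc2 = doc[unfolded doctrine_def, THEN conjunct2, THEN conjunct2, THEN conjunct1]
lemmas dc3 = doc[unfolded doctrine_def, THEN conjunct2, THEN conjunct2, THEN conjunct2, THEN conjunct1]
lemmas dc4 = doc[unfolded doctrine_def, THEN conjunct2, THEN conjunct2, THEN conjunct2, THEN conjunct2]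
lemmas pc1 = prim[unfolded primary_with_def, THEN conjunct2, THEN conjunct1]
lemmas pc2 = prim[unfolded primary_with_def, THEN conjunct2, THEN conjunct2]

lemma le_refl: assumes "A \<in> Ob D" "a \<in> Pc D A" shows "le D A a a"
proof - have "\<forall>\<alpha>\<in>Pc D A. le D A \<alpha> \<alpha>" using dc1 assms(1) by blast
  then show ?thesis using assms(2) by blast qed
lemma le_antisym: assumes "A \<in> Ob D" "a \<in> Pc D A" "b \<in> Pc D A" "le D A a b" "le D A b a" shows "a = b"
proof - have "\<forall>\<alpha>\<in>Pc D A. \<forall>\<beta>\<in>Pc D A. le D A \<alpha> \<beta> \<and> le D A \<beta> \<alpha> \<longrightarrow> \<alpha> = \<beta>" using dc1 assms(1) by blast
  then show ?thesis using assms(2-) by blast qed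
lemma le_trans: assumes "A \<in> Ob D" "a \<in> Pc D A" "b \<in> Pc D A" "c \<in> Pc D A" "le D A a b" "le D A b c" shows "le D A a c"
proof - have "\<forall>\<alpha>\<in>Pc D A. \<forall>\<beta>\<in>Pc D A. \<forall>\<gamma>\<in>Pc D A. le D A \<alpha> \<beta> \<and> le D A \<beta> \<gamma> \<longrightarrow> le D A \<alpha> \<gamma>" using dc1 assms(1) by blast
  then show ?thesis using assms(2-) by blast qed
lemma rei_Pc: assumes "f \<in> hom D X Y" "a \<in> Pc D Y" shows "rei D f a \<in> Pc D X"
proof - have f: "f \<in> Ar D" "dom D f = X" "cod D f = Y" using assms(1) by (auto simp: hom_def)
  have "\<forall>\<alpha>\<in>Pc D (cod D f). rei D f \<alpha> \<in> Pc D (dom D f)" using dc2 f(1) by blast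
  then show ?thesis using assms(2) f by blast qed
lemma rei_mono: assumes "f \<in> hom D X Y" "a \<in> Pc D Y" "b \<in> Pc D Y" "le D Y a b" shows "le D X (rei D f a) (rei D f b)"
proof - have f: "f \<in> Ar D" "dom D f = X" "cod D f = Y" using assms(1) by (auto simp: hom_def)
  have "\<forall>\<alpha>\<in>Pc D (cod D f). \<forall>\<beta>\<in>Pc D (cod D f).
            le D (cod D f) \<alpha> \<beta> \<longrightarrow> le D (dom D f) (rei D f \<alpha>) (rei D f \<beta>)" using dc2 f(1) by blast
  then show ?thesis using assms(2-) f by blast qed
lemma rei_id: assumes "A \<in> Ob D" "a \<in> Pc D A" shows "rei D (idm D A) a = a"
  using dc3 assms by blast
lemma rei_comp: assumes "f \<in> hom D X Y" "g \<in> hom D Y Z" "a \<in> Pc D Z" shows "rei D (cmp D g f) a = rei D f (rei D g a)"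
proof - have f: "f \<in> Ar D" "g \<in> Ar D" "cod D f = dom D g" "cod D g = Z" using assms by (auto simp: hom_def)
  have "\<forall>\<alpha>\<in>Pc D (cod D g). rei D (cmp D g f) \<alpha> = rei D f (rei D g \<alpha>)" using dc4 f by blast
  then show ?thesis using assms(3) f by blast qed
lemma mt_props: assumes "A \<in> Ob D" "a \<in> Pc D A" "b \<in> Pc D A"
  shows "mt A a b \<in> Pc D A \<and> le D A (mt A a b) a \<and> le D A (mt A a b) b \<and>
        (\<forall>\<gamma>\<in>Pc D A. le D A \<gamma> a \<and> le D A \<gamma> b \<longrightarrow> le D A \<gamma> (mt A a b))"
proof - have "\<forall>\<alpha>\<in>Pc D A. \<forall>\<beta>\<in>Pc D A. mt A \<alpha> \<beta> \<in> Pc D A \<and>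
        le D A (mt A \<alpha> \<beta>) \<alpha> \<and> le D A (mt A \<alpha> \<beta>) \<beta> \<and>
        (\<forall>\<gamma>\<in>Pc D A. le D A \<gamma> \<alpha> \<and> le D A \<gamma> \<beta> \<longrightarrow> le D A \<gamma> (mt A \<alpha> \<beta>))" using pc1 assms(1) by blast
  then show ?thesis using assms(2,3) by blast qed
lemma mt_Pc: "A \<in> Ob D \<Longrightarrow> a \<in> Pc D A \<Longrightarrow> b \<in> Pc D A \<Longrightarrow> mt A a b \<in> Pc D A"
  using mt_props by blast
lemma mt_le1: "A \<in> Ob D \<Longrightarrow> a \<in> Pc D A \<Longrightarrow> b \<in> Pc D A \<Longrightarrow> le D A (mt A a b) a"
  using mt_props by blast
lemma mt_le2: "A \<in> Ob D \<Longrightarrow> a \<in> Pc D A \<Longrightarrow> b \<in> Pc D A \<Longrightarrow> le D A (mt A a b) b"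
  using mt_props by blast
lemma mt_glb: "A \<in> Ob D \<Longrightarrow> a \<in> Pc D A \<Longrightarrow> b \<in> Pc D A \<Longrightarrow> c \<in> Pc D A \<Longrightarrow> le D A c a \<Longrightarrow> le D A c b \<Longrightarrow> le D A c (mt A a b)"
  using mt_props by blast
lemma rei_mt: assumes "f \<in> hom D X Y" "a \<in> Pc D Y" "b \<in> Pc D Y" shows "rei D f (mt Y a b) = mt X (rei D f a) (rei D f b)"
proof - have f: "f \<in> Ar D" "dom D f = X" "cod D f = Y" using assms(1) by (auto simp: hom_def)
  have "\<forall>\<alpha>\<in>Pc D (cod D f). \<forall>\<beta>\<in>Pc D (cod D f).
        rei D f (mt (cod D f) \<alpha> \<beta>) = mt (dom D f) (rei D f \<alpha>) (rei D f \<beta>)" using pc2 f(1) by blast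
  then show ?thesis using assms(2-) f by blast qed

lemmas elc = el[unfolded elementary_with_def, THEN conjunct2]
lemma dl_Pc: "A \<in> Ob D \<Longrightarrow> dl A \<in> Pc D (prd D A A)"
  using elc by blast

definition "p1 X A = pr1 D X (prd D A A)"
definition "p2 X A = cmp D (pr1 D A A) (pr2 D X (prd D A A))"
definition "p3 X A = cmp D (pr2 D A A) (pr2 D X (prd D A A))"
definition "idD X A = tup D (cmp D (idm D X) (pr1 D X A)) (cmp D (tup D (idm D A) (idm D A)) (pr2 D X A))"

lemma elem: assumes "A \<in> Ob D" "X \<in> Ob D" "\<psi> \<in> Pc D (prd D X A)" "\<phi> \<in> Pc D (prd D X (prd D A A))"
   "le D (prd D X A) \<psi> (rei D (idD X A) \<phi>)"
  shows "le D (prd D X (prd D A A)) (mt (prd D X (prd D A A)) (rei D (tup D (p1 X A) (p2 X A)) \<psi>)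
             (rei D (tup D (p2 X A) (p3 X A)) (dl A))) \<phi>"
proof -
  note h = bspec[OF elc assms(1), THEN conjunct2]
  note h2 = bspec[OF h assms(2), unfolded Let_def]
  note h3 = bspec[OF bspec[OF h2 assms(3)] assms(4)]
  show ?thesis unfolding p1_def p2_def p3_def using iffD2[OF h3 assms(5)[unfolded idD_def]] .
qed

lemma elem_iff: assumes "A \<in> Ob D" "X \<in> Ob D" "\<psi> \<in> Pc D (prd D X A)" "\<phi> \<in> Pc D (prd D X (prd D A A))"
  shows "le D (prd D X (prd D A A)) (mt (prd D X (prd D A A)) (rei D (tup D (p1 X A) (p2 X A)) \<psi>)
             (rei D (tup D (p2 X A) (p3 X A)) (dl A))) \<phi> \<longleftrightarrow> le D (prd D X A) \<psi> (rei D (idD X A) \<phi>)"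
proof -
  note h = bspec[OF elc assms(1), THEN conjunct2]
  note h2 = bspec[OF h assms(2), unfolded Let_def]
  note h3 = bspec[OF bspec[OF h2 assms(3)] assms(4)]
  show ?thesis unfolding p1_def p2_def p3_def idD_def using h3 .
qed

lemma p_hom: assumes "X \<in> Ob D" "A \<in> Ob D"
  shows "p1 X A \<in> hom D (prd D X (prd D A A)) X" "p2 X A \<in> hom D (prd D X (prd D A A)) A"
    "p3 X A \<in> hom D (prd D X (prd D A A)) A"
  unfolding p1_def p2_def p3_def using assms
  by (auto intro!: comp_hom pr1_hom pr2_hom prd_Ob)

lemma p_tup: assumes w: "w \<in> hom D Z X" and u: "u \<in> hom D Z A" and v: "v \<in> hom D Z A"
  shows "cmp D (p1 X A) (tup D w (tup D u v)) = w" "cmp D (p2 X A) (tup D w (tup D u v)) = u"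
    "cmp D (p3 X A) (tup D w (tup D u v)) = v"
proof -
  have O: "X \<in> Ob D" "A \<in> Ob D" using w u hom_ObY by auto
  have uv: "tup D u v \<in> hom D Z (prd D A A)" using u v by (rule tup_hom)
  show "cmp D (p1 X A) (tup D w (tup D u v)) = w" unfolding p1_def using pr1_tup[OF w uv] .
  show "cmp D (p2 X A) (tup D w (tup D u v)) = u" unfolding p2_def
    using assoc[OF tup_hom[OF w uv] pr2_hom[OF O(1) prd_Ob[OF O(2) O(2)]] pr1_hom[OF O(2) O(2)]]
      pr2_tup[OF w uv] pr1_tup[OF u v] by simp
  show "cmp D (p3 X A) (tup D w (tup D u v)) = v" unfolding p3_def
    using assoc[OF tup_hom[OF w uv] pr2_hom[OF O(1) prd_Ob[OF O(2) O(2)]] pr2_hom[OF O(2) O(2)]]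
      pr2_tup[OF w uv] pr2_tup[OF u v] by simp
qed

lemma diag_comp: assumes "f \<in> hom D Z A"
  shows "cmp D (tup D (idm D A) (idm D A)) f = tup D f f"
proof -
  have "A \<in> Ob D" using assms hom_ObY by auto
  then show ?thesis using tup_comp[OF id_hom id_hom assms] id_l[OF assms] by simp
qed

lemma idD_eq: assumes "X \<in> Ob D" "A \<in> Ob D"
  shows "idD X A = tup D (pr1 D X A) (tup D (pr2 D X A) (pr2 D X A))"
  unfolding idD_def using id_l[OF pr1_hom[OF assms]] diag_comp[OF pr2_hom[OF assms]] by simp

lemma tupp_comp: assumes w: "w \<in> hom D Z X" and u: "u \<in> hom D Z A" and v: "v \<in> hom D Z A"
  shows "cmp D (tup D (p1 X A) (p2 X A)) (tup D w (tup D u v)) = tup D w u"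
    "cmp D (tup D (p2 X A) (p3 X A)) (tup D w (tup D u v)) = tup D u v"
proof -
  have O: "X \<in> Ob D" "A \<in> Ob D" using w u hom_ObY by auto
  have t: "tup D w (tup D u v) \<in> hom D Z (prd D X (prd D A A))" using w u v by (intro tup_hom)
  show "cmp D (tup D (p1 X A) (p2 X A)) (tup D w (tup D u v)) = tup D w u"
    using tup_comp[OF p_hom(1)[OF O] p_hom(2)[OF O] t] p_tup[OF w u v] by simp
  show "cmp D (tup D (p2 X A) (p3 X A)) (tup D w (tup D u v)) = tup D u v"
    using tup_comp[OF p_hom(2)[OF O] p_hom(3)[OF O] t] p_tup[OF w u v] by simp
qed

lemma Elim: assumes w: "w \<in> hom D Z X" and u: "u \<in> hom D Z B" and v: "v \<in> hom D Z B"
  and ps: "\<psi> \<in> Pc D (prd D X B)" and ph: "\<phi> \<in> Pc D (prd D X (prd D B B))"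
  and le: "le D (prd D X B) \<psi> (rei D (idD X B) \<phi>)"
  shows "le D Z (mt Z (rei D (tup D w u) \<psi>) (rei D (tup D u v) (dl B))) (rei D (tup D w (tup D u v)) \<phi>)"
proof -
  have O: "X \<in> Ob D" "B \<in> Ob D" "Z \<in> Ob D" using w u hom_ObY hom_ObX by auto
  let ?XBB = "prd D X (prd D B B)"
  have OX: "?XBB \<in> Ob D" using O by (intro prd_Ob)
  have t: "tup D w (tup D u v) \<in> hom D Z ?XBB" using w u v by (intro tup_hom)
  have h12: "tup D (p1 X B) (p2 X B) \<in> hom D ?XBB (prd D X B)" using p_hom[OF O(1,2)] by (intro tup_hom)
  have h23: "tup D (p2 X B) (p3 X B) \<in> hom D ?XBB (prd D B B)" using p_hom[OF O(1,2)] by (intro tup_hom)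
  have a: "rei D (tup D (p1 X B) (p2 X B)) \<psi> \<in> Pc D ?XBB" using rei_Pc[OF h12 ps] .
  have b: "rei D (tup D (p2 X B) (p3 X B)) (dl B) \<in> Pc D ?XBB" using rei_Pc[OF h23 dl_Pc[OF O(2)]] .
  have E: "le D ?XBB (mt ?XBB (rei D (tup D (p1 X B) (p2 X B)) \<psi>) (rei D (tup D (p2 X B) (p3 X B)) (dl B))) \<phi>"
    using elem[OF O(2) O(1) ps ph le] .
  have "le D Z (rei D (tup D w (tup D u v)) (mt ?XBB (rei D (tup D (p1 X B) (p2 X B)) \<psi>) (rei D (tup D (p2 X B) (p3 X B)) (dl B))))
      (rei D (tup D w (tup D u v)) \<phi>)"
    using rei_mono[OF t mt_Pc[OF OX a b] ph E] .
  also have "rei D (tup D w (tup D u v)) (mt ?XBB (rei D (tup D (p1 X B) (p2 X B)) \<psi>) (rei D (tup D (p2 X B) (p3 X B)) (dl B)))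
     = mt Z (rei D (tup D w u) \<psi>) (rei D (tup D u v) (dl B))"
    using rei_mt[OF t a b] rei_comp[OF t h12 ps, symmetric] rei_comp[OF t h23 dl_Pc[OF O(2)], symmetric]
      tupp_comp[OF w u v] by simp
  finally show ?thesis .
qed

definition "tp A = rei D (tup D (idm D A) (idm D A)) (dl A)"

lemma diag_hom: "A \<in> Ob D \<Longrightarrow> tup D (idm D A) (idm D A) \<in> hom D A (prd D A A)"
  by (intro tup_hom id_hom)

lemma top_Pc: "A \<in> Ob D \<Longrightarrow> tp A \<in> Pc D A"
  unfolding tp_def by (rule rei_Pc[OF diag_hom dl_Pc])

lemma idD_hom: assumes "X \<in> Ob D" "A \<in> Ob D" shows "idD X A \<in> hom D (prd D X A) (prd D X (prd D A A))"
  unfolding idD_eq[OF assms] using assms by (intro tup_hom pr1_hom pr2_hom)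

lemma E1: assumes O: "X \<in> Ob D" "A \<in> Ob D" and ps: "\<psi> \<in> Pc D (prd D X A)"
  shows "le D (prd D X A) \<psi> (rei D (pr2 D X A) (tp A))"
proof -
  let ?XAA = "prd D X (prd D A A)"
  have OX: "?XAA \<in> Ob D" using O by (intro prd_Ob)
  have h12: "tup D (p1 X A) (p2 X A) \<in> hom D ?XAA (prd D X A)" using p_hom[OF O] by (intro tup_hom)
  have h23: "tup D (p2 X A) (p3 X A) \<in> hom D ?XAA (prd D A A)" using p_hom[OF O] by (intro tup_hom)
  have ph: "rei D (tup D (p2 X A) (p3 X A)) (dl A) \<in> Pc D ?XAA" using rei_Pc[OF h23 dl_Pc[OF O(2)]] .
  have a: "rei D (tup D (p1 X A) (p2 X A)) \<psi> \<in> Pc D ?XAA" using rei_Pc[OF h12 ps] .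
  have "le D ?XAA (mt ?XAA (rei D (tup D (p1 X A) (p2 X A)) \<psi>) (rei D (tup D (p2 X A) (p3 X A)) (dl A)))
      (rei D (tup D (p2 X A) (p3 X A)) (dl A))" using mt_le2[OF OX a ph] .
  then have 1: "le D (prd D X A) \<psi> (rei D (idD X A) (rei D (tup D (p2 X A) (p3 X A)) (dl A)))"
    using elem_iff[OF O(2) O(1) ps ph] by simp
  have p1: "pr1 D X A \<in> hom D (prd D X A) X" and p2: "pr2 D X A \<in> hom D (prd D X A) A" using O by (auto intro: pr1_hom pr2_hom)
  have "rei D (idD X A) (rei D (tup D (p2 X A) (p3 X A)) (dl A)) = rei D (cmp D (tup D (p2 X A) (p3 X A)) (idD X A)) (dl A)"
    using rei_comp[OF idD_hom[OF O] h23 dl_Pc[OF O(2)]] by simp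
  also have "cmp D (tup D (p2 X A) (p3 X A)) (idD X A) = cmp D (tup D (idm D A) (idm D A)) (pr2 D X A)"
    unfolding idD_eq[OF O] tupp_comp[OF p1 p2 p2] diag_comp[OF p2] ..
  also have "rei D (cmp D (tup D (idm D A) (idm D A)) (pr2 D X A)) (dl A) = rei D (pr2 D X A) (tp A)"
    unfolding tp_def using rei_comp[OF p2 diag_hom[OF O(2)] dl_Pc[OF O(2)]] .
  finally show ?thesis using 1 by simp
qed

lemma top_max: assumes O: "A \<in> Ob D" and a: "a \<in> Pc D A" shows "le D A a (tp A)"
proof -
  have p1: "pr1 D A A \<in> hom D (prd D A A) A" and p2: "pr2 D A A \<in> hom D (prd D A A) A" using O by (auto intro: pr1_hom pr2_hom)
  have "le D (prd D A A) (rei D (pr1 D A A) a) (rei D (pr2 D A A) (tp A))"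
    using E1[OF O O rei_Pc[OF p1 a]] .
  from rei_mono[OF diag_hom[OF O] rei_Pc[OF p1 a] rei_Pc[OF p2 top_Pc[OF O]] this]
  show ?thesis
    using rei_comp[OF diag_hom[OF O] p1 a, symmetric] rei_comp[OF diag_hom[OF O] p2 top_Pc[OF O], symmetric]
      pr1_tup[OF id_hom[OF O] id_hom[OF O]] pr2_tup[OF id_hom[OF O] id_hom[OF O]] rei_id[OF O a] rei_id[OF O top_Pc[OF O]]
    by simp
qed

lemma Sub1: assumes u: "u \<in> hom D Z B" and v: "v \<in> hom D Z B" and b: "\<beta> \<in> Pc D B"
  shows "le D Z (mt Z (rei D u \<beta>) (rei D (tup D u v) (dl B))) (rei D v \<beta>)"
proof -
  have O: "Z \<in> Ob D" "B \<in> Ob D" using u hom_ObX hom_ObY by auto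
  have iZ: "idm D Z \<in> hom D Z Z" using id_hom[OF O(1)] .
  have q2: "pr2 D Z B \<in> hom D (prd D Z B) B" and q1: "pr1 D Z B \<in> hom D (prd D Z B) Z" using O by (auto intro: pr1_hom pr2_hom)
  have ps: "rei D (pr2 D Z B) \<beta> \<in> Pc D (prd D Z B)" using rei_Pc[OF q2 b] .
  have ph: "rei D (p3 Z B) \<beta> \<in> Pc D (prd D Z (prd D B B))" using rei_Pc[OF p_hom(3)[OF O] b] .
  have c3: "cmp D (p3 Z B) (idD Z B) = pr2 D Z B" unfolding idD_eq[OF O] using p_tup(3)[OF q1 q2 q2] .
  have "rei D (idD Z B) (rei D (p3 Z B) \<beta>) = rei D (pr2 D Z B) \<beta>"
    using rei_comp[OF idD_hom[OF O] p_hom(3)[OF O] b] c3 by simp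
  then have le: "le D (prd D Z B) (rei D (pr2 D Z B) \<beta>) (rei D (idD Z B) (rei D (p3 Z B) \<beta>))"
    using le_refl[OF prd_Ob[OF O] ps] by simp
  note E = Elim[OF iZ u v ps ph le]
  have e1: "rei D (tup D (idm D Z) u) (rei D (pr2 D Z B) \<beta>) = rei D u \<beta>"
    using rei_comp[OF tup_hom[OF iZ u] q2 b] pr2_tup[OF iZ u] by simp
  have e2: "rei D (tup D (idm D Z) (tup D u v)) (rei D (p3 Z B) \<beta>) = rei D v \<beta>"
    using rei_comp[OF tup_hom[OF iZ tup_hom[OF u v]] p_hom(3)[OF O] b] p_tup(3)[OF iZ u v] by simp
  show ?thesis using E e1 e2 by simp
qed

lemma Sym: assumes u: "u \<in> hom D Z B" and v: "v \<in> hom D Z B"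
  and H: "\<forall>\<psi>\<in>Pc D Z. le D Z \<psi> (rei D (tup D u v) (dl B))" and ps: "\<psi> \<in> Pc D Z"
  shows "le D Z \<psi> (rei D (tup D v u) (dl B))"
proof -
  have O: "Z \<in> Ob D" "B \<in> Ob D" using u hom_ObX hom_ObY by auto
  have iZ: "idm D Z \<in> hom D Z Z" using id_hom[OF O(1)] .
  have q2: "pr2 D Z B \<in> hom D (prd D Z B) B" and q1: "pr1 D Z B \<in> hom D (prd D Z B) Z" using O by (auto intro: pr1_hom pr2_hom)
  have OB: "prd D Z B \<in> Ob D" using O by (rule prd_Ob)
  have h32: "tup D (p3 Z B) (p2 Z B) \<in> hom D (prd D Z (prd D B B)) (prd D B B)" using p_hom[OF O] by (intro tup_hom)
  have ps0: "rei D (pr1 D Z B) (tp Z) \<in> Pc D (prd D Z B)" using rei_Pc[OF q1 top_Pc[OF O(1)]] .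
  have ph: "rei D (tup D (p3 Z B) (p2 Z B)) (dl B) \<in> Pc D (prd D Z (prd D B B))" using rei_Pc[OF h32 dl_Pc[OF O(2)]] .
  have c: "cmp D (tup D (p3 Z B) (p2 Z B)) (idD Z B) = cmp D (tup D (idm D B) (idm D B)) (pr2 D Z B)"
    unfolding idD_eq[OF O] tup_comp[OF p_hom(3)[OF O] p_hom(2)[OF O] tup_hom[OF q1 tup_hom[OF q2 q2]]]
      p_tup[OF q1 q2 q2] diag_comp[OF q2] ..
  have "rei D (idD Z B) (rei D (tup D (p3 Z B) (p2 Z B)) (dl B)) = rei D (pr2 D Z B) (tp B)"
    using rei_comp[OF idD_hom[OF O] h32 dl_Pc[OF O(2)]] c rei_comp[OF q2 diag_hom[OF O(2)] dl_Pc[OF O(2)]]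
    unfolding tp_def by simp
  then have le: "le D (prd D Z B) (rei D (pr1 D Z B) (tp Z)) (rei D (idD Z B) (rei D (tup D (p3 Z B) (p2 Z B)) (dl B)))"
    using E1[OF O ps0] by simp
  note E = Elim[OF iZ u v ps0 ph le]
  have e1: "rei D (tup D (idm D Z) u) (rei D (pr1 D Z B) (tp Z)) = tp Z"
    using rei_comp[OF tup_hom[OF iZ u] q1 top_Pc[OF O(1)]] pr1_tup[OF iZ u] rei_id[OF O(1) top_Pc[OF O(1)]] by simp
  have t: "tup D (idm D Z) (tup D u v) \<in> hom D Z (prd D Z (prd D B B))" using iZ u v by (intro tup_hom)
  have e2: "rei D (tup D (idm D Z) (tup D u v)) (rei D (tup D (p3 Z B) (p2 Z B)) (dl B)) = rei D (tup D v u) (dl B)"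
    using rei_comp[OF t h32 dl_Pc[OF O(2)]] tup_comp[OF p_hom(3)[OF O] p_hom(2)[OF O] t] p_tup[OF iZ u v] by simp
  have uv: "rei D (tup D u v) (dl B) \<in> Pc D Z" using rei_Pc[OF tup_hom[OF u v] dl_Pc[OF O(2)]] .
  have vu: "rei D (tup D v u) (dl B) \<in> Pc D Z" using rei_Pc[OF tup_hom[OF v u] dl_Pc[OF O(2)]] .
  have E': "le D Z (mt Z (tp Z) (rei D (tup D u v) (dl B))) (rei D (tup D v u) (dl B))" using E e1 e2 by simp
  have "le D Z \<psi> (mt Z (tp Z) (rei D (tup D u v) (dl B)))"
    using mt_glb[OF O(1) top_Pc[OF O(1)] uv ps top_max[OF O(1) ps]] H ps by blast
  then show ?thesis using le_trans[OF O(1) ps mt_Pc[OF O(1) top_Pc[OF O(1)] uv] vu _ E'] by blast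
qed

lemma bt_Pc: "A \<in> Ob D \<Longrightarrow> bt A \<in> Pc D A" using ccw unfolding cocomp_with_def by blast
lemma bt_le: "A \<in> Ob D \<Longrightarrow> a \<in> Pc D A \<Longrightarrow> le D A (bt A) a" using ccw unfolding cocomp_with_def by blast
lemma cc_inst: assumes "A \<in> Ob D" "\<alpha> \<in> Pc D A"
  shows "co A \<alpha> \<in> Ob D \<and> cc A \<alpha> \<in> hom D (co A \<alpha>) A \<and>
        rei D (cc A \<alpha>) \<alpha> = bt (co A \<alpha>) \<and>
        (\<forall>Y\<in>Ob D. \<forall>f\<in>hom D Y A. rei D f \<alpha> = bt Y \<longrightarrow>
            (\<exists>!g. g \<in> hom D Y (co A \<alpha>) \<and> cmp D (cc A \<alpha>) g = f))"
proof -
  have "\<forall>A\<in>Ob D. \<forall>\<alpha>\<in>Pc D A. co A \<alpha> \<in> Ob D \<and> cc A \<alpha> \<in> hom D (co A \<alpha>) A \<and>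
        rei D (cc A \<alpha>) \<alpha> = bt (co A \<alpha>) \<and>
        (\<forall>Y\<in>Ob D. \<forall>f\<in>hom D Y A. rei D f \<alpha> = bt Y \<longrightarrow>
            (\<exists>!g. g \<in> hom D Y (co A \<alpha>) \<and> cmp D (cc A \<alpha>) g = f))"
    using ccw unfolding cocomp_with_def by (rule conjunct2)
  then show ?thesis using assms by blast
qed
lemma cc_hom: "A \<in> Ob D \<Longrightarrow> \<alpha> \<in> Pc D A \<Longrightarrow> cc A \<alpha> \<in> hom D (co A \<alpha>) A" using cc_inst by blast
lemma cc_bt: "A \<in> Ob D \<Longrightarrow> \<alpha> \<in> Pc D A \<Longrightarrow> rei D (cc A \<alpha>) \<alpha> = bt (co A \<alpha>)" using cc_inst by blast
lemma cc_univ: assumes "A \<in> Ob D" "\<alpha> \<in> Pc D A" "f \<in> hom D Y A" "rei D f \<alpha> = bt Y"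
  obtains g where "g \<in> hom D Y (co A \<alpha>)" "cmp D (cc A \<alpha>) g = f"
proof -
  have "Y \<in> Ob D" using assms(3) hom_ObX by blast
  then show ?thesis using cc_inst[OF assms(1,2)] assms(3,4) that by blast
qed
lemma fullI: assumes "A \<in> Ob D" "\<alpha> \<in> Pc D A" "\<beta> \<in> Pc D A" "g \<in> hom D (co A \<beta>) (co A \<alpha>)" "cmp D (cc A \<alpha>) g = cc A \<beta>"
  shows "le D A \<alpha> \<beta>"
  using full assms unfolding full_cocomp_def by blast

definition "iniL W \<longleftrightarrow> (\<forall>Y\<in>Ob D. \<exists>!u. u \<in> hom D W Y)"
definition "SI W \<longleftrightarrow> (\<exists>Z w. stable_initial D Z \<and> w \<in> hom D W Z)"

lemma stable_SI: "stable_initial D Z \<Longrightarrow> SI Z"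
  unfolding SI_def using id_hom by (auto simp: stable_initial_def)

lemma SI_pre: "v \<in> hom D V W \<Longrightarrow> SI W \<Longrightarrow> SI V"
  unfolding SI_def using comp_hom by blast

lemma SI_ini: assumes "SI W" shows "iniL W"
proof -
  obtain Z w where Z: "stable_initial D Z" and w: "w \<in> hom D W Z" using assms unfolding SI_def by blast
  have OW: "W \<in> Ob D" and OZ: "Z \<in> Ob D" using w hom_ObX hom_ObY by auto
  have uZ: "\<forall>X\<in>Ob D. \<exists>!u. u \<in> hom D Z X" using Z unfolding stable_initial_def by blast
  have "iso_objs D (prd D W Z) Z" using Z OW unfolding stable_initial_def by blast
  then obtain f g where f: "f \<in> hom D (prd D W Z) Z" and g: "g \<in> hom D Z (prd D W Z)"
    and gf: "cmp D g f = idm D (prd D W Z)" unfolding iso_objs_def by blast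
  have iW: "idm D W \<in> hom D W W" using id_hom[OF OW] .
  have s: "tup D (idm D W) w \<in> hom D W (prd D W Z)" using iW w by (rule tup_hom)
  have q1: "pr1 D W Z \<in> hom D (prd D W Z) W" using pr1_hom[OF OW OZ] .
  have q1s: "cmp D (pr1 D W Z) (tup D (idm D W) w) = idm D W" using pr1_tup[OF iW w] .
  show ?thesis unfolding iniL_def
  proof
    fix Y assume Y: "Y \<in> Ob D"
    obtain u where u: "u \<in> hom D Z Y" using uZ Y by blast
    have ex: "cmp D (cmp D u f) (tup D (idm D W) w) \<in> hom D W Y"
      by (intro comp_hom[OF s] comp_hom[OF f u])
    have un: "a = b" if a: "a \<in> hom D W Y" and b: "b \<in> hom D W Y" for a b
    proof -
      have aq: "cmp D a (pr1 D W Z) \<in> hom D (prd D W Z) Y" using comp_hom[OF q1 a] .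
      have bq: "cmp D b (pr1 D W Z) \<in> hom D (prd D W Z) Y" using comp_hom[OF q1 b] .
      have "cmp D (cmp D a (pr1 D W Z)) g = cmp D (cmp D b (pr1 D W Z)) g"
        using uZ Y comp_hom[OF g aq] comp_hom[OF g bq] by blast
      then have "cmp D (cmp D (cmp D a (pr1 D W Z)) g) f = cmp D (cmp D (cmp D b (pr1 D W Z)) g) f" by simp
      then have ab: "cmp D a (pr1 D W Z) = cmp D b (pr1 D W Z)"
        using assoc[OF f g aq, symmetric] assoc[OF f g bq, symmetric] gf id_r[OF aq] id_r[OF bq] by simp
      have "a = cmp D (cmp D a (pr1 D W Z)) (tup D (idm D W) w)"
        using assoc[OF s q1 a] q1s id_r[OF a] by simp
      also have "\<dots> = cmp D (cmp D b (pr1 D W Z)) (tup D (idm D W) w)" using ab by simp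
      also have "\<dots> = b" using assoc[OF s q1 b] q1s id_r[OF b] by simp
      finally show ?thesis .
    qed
    show "\<exists>!u. u \<in> hom D W Y" using ex un by blast
  qed
qed

lemma SI_trivial: assumes "SI W" "a \<in> Pc D W" shows "a = bt W"
proof -
  obtain Z w where "stable_initial D Z" and w: "w \<in> hom D W Z" using assms unfolding SI_def by blast
  have OW: "W \<in> Ob D" using w hom_ObX by blast
  have b: "bt W \<in> Pc D W" using bt_Pc[OF OW] .
  have c: "cc W a \<in> hom D (co W a) W" using cc_hom[OF OW assms(2)] .
  have cb: "cc W (bt W) \<in> hom D (co W (bt W)) W" using cc_hom[OF OW b] .
  have "SI (co W (bt W))" using SI_pre[OF cb assms(1)] .
  then have ini: "iniL (co W (bt W))" by (rule SI_ini)
  have OO: "co W a \<in> Ob D" using c hom_ObX by blast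
  obtain g where g: "g \<in> hom D (co W (bt W)) (co W a)" using ini OO unfolding iniL_def by blast
  have "cmp D (cc W a) g = cc W (bt W)" using ini OW comp_hom[OF g c] cb unfolding iniL_def by blast
  then have "le D W a (bt W)" using fullI[OF OW assms(2) b g] by blast
  then show ?thesis using le_antisym[OF OW assms(2) b _ bt_le[OF OW assms(2)]] by blast
qed

lemma la_use: assumes "left_adjoint D f L" "f \<in> hom D X Y" "\<alpha> \<in> Pc D X"
  shows "L \<alpha> \<in> Pc D Y" "\<beta> \<in> Pc D Y \<Longrightarrow> le D Y (L \<alpha>) \<beta> \<longleftrightarrow> le D X \<alpha> (rei D f \<beta>)"
  using assms unfolding left_adjoint_def hom_def by auto

lemma la_unit: assumes "left_adjoint D f L" "f \<in> hom D X Y" "\<alpha> \<in> Pc D X"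
  shows "le D X \<alpha> (rei D f (L \<alpha>))"
proof -
  have "Y \<in> Ob D" using assms(2) hom_ObY by blast
  then show ?thesis using la_use[OF assms] le_refl by blast
qed

lemma la_sec: assumes "left_adjoint D f L" "f \<in> hom D X Y" "\<alpha> \<in> Pc D X"
  and s: "s \<in> hom D Y X" "cmp D f s = idm D Y"
  shows "le D Y (rei D s \<alpha>) (L \<alpha>)"
proof -
  have OY: "Y \<in> Ob D" using assms(2) hom_ObY by blast
  have L: "L \<alpha> \<in> Pc D Y" using la_use[OF assms(1-3)] by blast
  from rei_mono[OF s(1) assms(3) rei_Pc[OF assms(2) L] la_unit[OF assms(1-3)]]
  show ?thesis using rei_comp[OF s(1) assms(2) L] s(2) rei_id[OF OY L] by simp
qed

lemma la_mono: assumes "left_adjoint D f L" "f \<in> hom D X Y" "\<alpha> \<in> Pc D X" "\<alpha>' \<in> Pc D X" "le D X \<alpha> \<alpha>'"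
  shows "le D Y (L \<alpha>) (L \<alpha>')"
proof -
  have OX: "X \<in> Ob D" using assms(2) hom_ObX by blast
  have L: "L \<alpha>' \<in> Pc D Y" using la_use[OF assms(1,2,4)] by blast
  have "le D X \<alpha> (rei D f (L \<alpha>'))"
    using le_trans[OF OX assms(3) assms(4) rei_Pc[OF assms(2) L] assms(5) la_unit[OF assms(1,2,4)]] .
  then show ?thesis using la_use(2)[OF assms(1-3) L] by blast
qed

lemma ac_inst: assumes "A \<in> Ob D" "\<not> stable_initial D A" "\<Gamma> \<in> Ob D"
  shows "left_adjoint D (pr1 D \<Gamma> A) (Sg1 \<Gamma> A) \<and>
        (\<forall>\<psi>\<in>Pc D (prd D \<Gamma> A). e1 \<Gamma> A \<psi> \<in> hom D \<Gamma> A \<and>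
            Sg1 \<Gamma> A \<psi> = rei D (tup D (idm D \<Gamma>) (e1 \<Gamma> A \<psi>)) \<psi>) \<and>
        left_adjoint D (pr2 D A \<Gamma>) (Sg2 A \<Gamma>) \<and>
        (\<forall>\<psi>\<in>Pc D (prd D A \<Gamma>). e2 A \<Gamma> \<psi> \<in> hom D \<Gamma> A \<and>
            Sg2 A \<Gamma> \<psi> = rei D (tup D (e2 A \<Gamma> \<psi>) (idm D \<Gamma>)) \<psi>)"
  using ac assms unfolding AC_with_def by blast

lemma graph_eq: assumes c: "c \<in> hom D Q A"
  shows "graph D dl c = rei D (tup D (cmp D c (pr1 D Q A)) (pr2 D Q A)) (dl A)"
proof -
  have Q: "Q \<in> Ob D" "A \<in> Ob D" using c hom_ObX hom_ObY by auto
  show ?thesis unfolding graph_def hom_dom[OF c] hom_cod[OF c] id_l[OF pr2_hom[OF Q]] ..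
qed

lemma graph_hom: assumes c: "c \<in> hom D Q A"
  shows "tup D (cmp D c (pr1 D Q A)) (pr2 D Q A) \<in> hom D (prd D Q A) (prd D A A)"
proof -
  have Q: "Q \<in> Ob D" "A \<in> Ob D" using c hom_ObX hom_ObY by auto
  show ?thesis using Q c by (intro tup_hom comp_hom[OF pr1_hom] pr2_hom)
qed

lemma graph_Pc: assumes c: "c \<in> hom D Q A" shows "graph D dl c \<in> Pc D (prd D Q A)"
proof -
  have Q: "A \<in> Ob D" using c hom_ObY by auto
  show ?thesis unfolding graph_eq[OF c] using rei_Pc[OF graph_hom[OF c] dl_Pc[OF Q]] .
qed

lemma graph_rei: assumes c: "c \<in> hom D Q A" and t1: "t1 \<in> hom D Z Q" and t2: "t2 \<in> hom D Z A"
  shows "rei D (tup D t1 t2) (graph D dl c) = rei D (tup D (cmp D c t1) t2) (dl A)"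
proof -
  have Q: "Q \<in> Ob D" "A \<in> Ob D" using c hom_ObX hom_ObY by auto
  have q1: "pr1 D Q A \<in> hom D (prd D Q A) Q" and q2: "pr2 D Q A \<in> hom D (prd D Q A) A" using Q by (auto intro: pr1_hom pr2_hom)
  have t: "tup D t1 t2 \<in> hom D Z (prd D Q A)" using t1 t2 by (rule tup_hom)
  have "cmp D (tup D (cmp D c (pr1 D Q A)) (pr2 D Q A)) (tup D t1 t2) = tup D (cmp D c t1) t2"
    using tup_comp[OF comp_hom[OF q1 c] q2 t] assoc[OF t q1 c, symmetric] pr1_tup[OF t1 t2] pr2_tup[OF t1 t2] by simp
  then show ?thesis unfolding graph_eq[OF c] using rei_comp[OF t graph_hom[OF c] dl_Pc[OF Q(2)]] by simp
qed

lemma ec_inst: assumes "X \<in> Ob D" "A \<in> Ob D" "f \<in> hom D X A" "\<alpha> \<in> Pc D A"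
  "\<not> stable_initial D (co A \<alpha>)" "\<not> stable_initial D (co X (rei D f \<alpha>))"
  shows "rei D f (rei D (tup D (e2 (co A \<alpha>) A (graph D dl (cc A \<alpha>))) (idm D A)) (graph D dl (cc A \<alpha>)))
             = rei D (tup D (e2 (co X (rei D f \<alpha>)) X (graph D dl (cc X (rei D f \<alpha>)))) (idm D X)) (graph D dl (cc X (rei D f \<alpha>)))"
proof -
  have "let O1 = co A \<alpha>; c1 = cc A \<alpha>;
            O2 = co X (rei D f \<alpha>); c2 = cc X (rei D f \<alpha>)
        in \<not> stable_initial D O1 \<and> \<not> stable_initial D O2 \<longrightarrow>
           rei D f (rei D (tup D (e2 O1 A (graph D dl c1)) (idm D A)) (graph D dl c1))
             = rei D (tup D (e2 O2 X (graph D dl c2)) (idm D X)) (graph D dl c2)"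
    using ec assms(1-4) by blast
  then show ?thesis using assms(5,6) unfolding Let_def by blast
qed

lemma PP: assumes OX: "X \<in> Ob D" and OG: "\<Gamma> \<in> Ob D" and nX: "\<not> SI X" and nG: "\<not> SI \<Gamma>"
  shows "rei D (pr2 D X \<Gamma>) (bt \<Gamma>) = bt (prd D X \<Gamma>)"
proof -
  define Y where "Y = prd D X \<Gamma>"
  define q2 where "q2 = pr2 D X \<Gamma>"
  define \<gamma> where "\<gamma> = rei D q2 (bt \<Gamma>)"
  have OY: "Y \<in> Ob D" unfolding Y_def using OX OG by (rule prd_Ob)
  have q2h: "q2 \<in> hom D Y \<Gamma>" unfolding q2_def Y_def using OX OG by (rule pr2_hom)
  have btG: "bt \<Gamma> \<in> Pc D \<Gamma>" using bt_Pc[OF OG] .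
  have btY: "bt Y \<in> Pc D Y" using bt_Pc[OF OY] .
  have gP: "\<gamma> \<in> Pc D Y" unfolding \<gamma>_def using rei_Pc[OF q2h btG] .
  have nsX: "\<not> stable_initial D X" using nX stable_SI by blast
  have iG: "idm D \<Gamma> \<in> hom D \<Gamma> \<Gamma>" using id_hom[OF OG] .
  have iY: "idm D Y \<in> hom D Y Y" using id_hom[OF OY] .
  note acX = ac_inst[OF OX nsX OG]
  have e: "e2 X \<Gamma> (bt Y) \<in> hom D \<Gamma> X" using acX btY unfolding Y_def by blast
  define c1 where "c1 = cc \<Gamma> (bt \<Gamma>)"
  define O1 where "O1 = co \<Gamma> (bt \<Gamma>)"
  have c1h: "c1 \<in> hom D O1 \<Gamma>" unfolding c1_def O1_def using cc_hom[OF OG btG] .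
  have OO1: "O1 \<in> Ob D" using c1h hom_ObX by blast
  obtain g1 where g1: "g1 \<in> hom D \<Gamma> O1" "cmp D c1 g1 = idm D \<Gamma>"
    using cc_univ[OF OG btG iG rei_id[OF OG btG]] unfolding c1_def O1_def by blast
  have ns1: "\<not> stable_initial D O1" using g1(1) nG stable_SI SI_pre by blast
  define c2 where "c2 = cc Y \<gamma>"
  define O2 where "O2 = co Y \<gamma>"
  have c2h: "c2 \<in> hom D O2 Y" unfolding c2_def O2_def using cc_hom[OF OY gP] .
  have OO2: "O2 \<in> Ob D" using c2h hom_ObX by blast
  have sh: "tup D (e2 X \<Gamma> (bt Y)) (idm D \<Gamma>) \<in> hom D \<Gamma> Y" using tup_hom[OF e iG] by (simp add: Y_def)
  have "rei D (tup D (e2 X \<Gamma> (bt Y)) (idm D \<Gamma>)) \<gamma> = bt \<Gamma>"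
    unfolding \<gamma>_def using rei_comp[OF sh q2h btG] pr2_tup[OF e iG] rei_id[OF OG btG] unfolding q2_def Y_def by simp
  then obtain g2 where g2: "g2 \<in> hom D \<Gamma> O2"
    using cc_univ[OF OY gP sh] unfolding O2_def by blast
  have ns2: "\<not> stable_initial D O2" using g2 nG stable_SI SI_pre by blast
  have EC: "rei D q2 (rei D (tup D (e2 O1 \<Gamma> (graph D dl c1)) (idm D \<Gamma>)) (graph D dl c1))
     = rei D (tup D (e2 O2 Y (graph D dl c2)) (idm D Y)) (graph D dl c2)"
    using ec_inst[OF OY OG q2h btG, folded \<gamma>_def] ns1 ns2 unfolding c1_def O1_def c2_def O2_def by blast
  define M where "M = rei D (tup D (e2 O1 \<Gamma> (graph D dl c1)) (idm D \<Gamma>)) (graph D dl c1)"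
  note ac1 = ac_inst[OF OO1 ns1 OG]
  have G1: "graph D dl c1 \<in> Pc D (prd D O1 \<Gamma>)" using graph_Pc[OF c1h] .
  have la1: "left_adjoint D (pr2 D O1 \<Gamma>) (Sg2 O1 \<Gamma>)" using ac1 by blast
  have M_eq: "M = Sg2 O1 \<Gamma> (graph D dl c1)" unfolding M_def using ac1 G1 by metis
  have p21: "pr2 D O1 \<Gamma> \<in> hom D (prd D O1 \<Gamma>) \<Gamma>" using pr2_hom[OF OO1 OG] .
  have MP: "M \<in> Pc D \<Gamma>" unfolding M_eq using la_use(1)[OF la1 p21 G1] .
  have s1: "tup D g1 (idm D \<Gamma>) \<in> hom D \<Gamma> (prd D O1 \<Gamma>)" using g1(1) iG by (rule tup_hom)
  have "le D \<Gamma> (rei D (tup D g1 (idm D \<Gamma>)) (graph D dl c1)) M"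
    unfolding M_eq by (rule la_sec[OF la1 p21 G1 s1 pr2_tup[OF g1(1) iG]])
  moreover have "rei D (tup D g1 (idm D \<Gamma>)) (graph D dl c1) = tp \<Gamma>"
    unfolding graph_rei[OF c1h g1(1) iG] g1(2) tp_def ..
  ultimately have tM: "le D \<Gamma> (tp \<Gamma>) M" by simp
  have e': "e2 O2 Y (graph D dl c2) \<in> hom D Y O2" using ac_inst[OF OO2 ns2 OY] graph_Pc[OF c2h] by blast
  define u where "u = cmp D c2 (e2 O2 Y (graph D dl c2))"
  have uh: "u \<in> hom D Y Y" unfolding u_def using comp_hom[OF e' c2h] .
  have R: "rei D (tup D (e2 O2 Y (graph D dl c2)) (idm D Y)) (graph D dl c2) = rei D (tup D u (idm D Y)) (dl Y)"
    unfolding u_def using graph_rei[OF c2h e' iY] .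
  have H: "\<forall>\<psi>\<in>Pc D Y. le D Y \<psi> (rei D (tup D u (idm D Y)) (dl Y))"
  proof
    fix \<psi> assume ps: "\<psi> \<in> Pc D Y"
    have 1: "le D Y \<psi> (rei D q2 (tp \<Gamma>))" using E1[OF OX OG ps[unfolded Y_def]] unfolding q2_def Y_def .
    have 2: "le D Y (rei D q2 (tp \<Gamma>)) (rei D q2 M)" using rei_mono[OF q2h top_Pc[OF OG] MP tM] .
    have "le D Y \<psi> (rei D q2 M)"
      using le_trans[OF OY ps rei_Pc[OF q2h top_Pc[OF OG]] rei_Pc[OF q2h MP] 1 2] .
    then show "le D Y \<psi> (rei D (tup D u (idm D Y)) (dl Y))" using EC R unfolding M_def by simp
  qed
  have K1P: "rei D (tup D u (idm D Y)) (dl Y) \<in> Pc D Y" using rei_Pc[OF tup_hom[OF uh iY] dl_Pc[OF OY]] .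
  have K2P: "rei D (tup D (idm D Y) u) (dl Y) \<in> Pc D Y" using rei_Pc[OF tup_hom[OF iY uh] dl_Pc[OF OY]] .
  have H2: "le D Y \<gamma> (rei D (tup D (idm D Y) u) (dl Y))" using Sym[OF uh iY H gP] .
  have S1: "le D Y (mt Y (rei D (idm D Y) \<gamma>) (rei D (tup D (idm D Y) u) (dl Y))) (rei D u \<gamma>)"
    using Sub1[OF iY uh gP] .
  have "le D Y \<gamma> (mt Y \<gamma> (rei D (tup D (idm D Y) u) (dl Y)))"
    using mt_glb[OF OY gP K2P gP le_refl[OF OY gP] H2] .
  then have a1: "le D Y \<gamma> (rei D u \<gamma>)"
    using le_trans[OF OY gP mt_Pc[OF OY gP K2P] rei_Pc[OF uh gP] _ S1[unfolded rei_id[OF OY gP]]] by blast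
  have e'h: "e2 O2 Y (graph D dl c2) \<in> hom D Y O2" using e' .
  have bO2: "bt O2 \<in> Pc D O2" using bt_Pc[OF OO2] .
  have ug: "rei D u \<gamma> = rei D (e2 O2 Y (graph D dl c2)) (bt O2)"
    unfolding u_def using rei_comp[OF e' c2h gP] cc_bt[OF OY gP] unfolding c2_def O2_def by simp
  have a2: "le D Y (rei D (e2 O2 Y (graph D dl c2)) (bt O2)) (rei D u (bt Y))"
    using rei_mono[OF e' bO2 rei_Pc[OF c2h btY] bt_le[OF OO2 rei_Pc[OF c2h btY]]]
      rei_comp[OF e' c2h btY] unfolding u_def by simp
  have S2: "le D Y (mt Y (rei D u (bt Y)) (rei D (tup D u (idm D Y)) (dl Y))) (rei D (idm D Y) (bt Y))"
    using Sub1[OF uh iY btY] .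
  have ubP: "rei D u (bt Y) \<in> Pc D Y" using rei_Pc[OF uh btY] .
  have "le D Y (rei D u (bt Y)) (mt Y (rei D u (bt Y)) (rei D (tup D u (idm D Y)) (dl Y)))"
    using mt_glb[OF OY ubP K1P ubP le_refl[OF OY ubP]] H ubP by blast
  then have a3: "le D Y (rei D u (bt Y)) (bt Y)"
    using le_trans[OF OY ubP mt_Pc[OF OY ubP K1P] btY _ S2[unfolded rei_id[OF OY btY]]] by blast
  have "le D Y \<gamma> (bt Y)"
    using le_trans[OF OY gP rei_Pc[OF uh gP] btY a1
        le_trans[OF OY rei_Pc[OF uh gP] rei_Pc[OF uh btY] btY a2[folded ug] a3]] .
  then have "\<gamma> = bt Y" using le_antisym[OF OY gP btY _ bt_le[OF OY gP]] by blast
  then show ?thesis unfolding \<gamma>_def q2_def Y_def .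
qed

lemma BP: assumes h: "h \<in> hom D X \<Gamma>" shows "rei D h (bt \<Gamma>) = bt X"
proof (cases "SI X")
  case True
  have "\<Gamma> \<in> Ob D" using h hom_ObY by blast
  then show ?thesis using SI_trivial[OF True rei_Pc[OF h bt_Pc]] by blast
next
  case False
  have OX: "X \<in> Ob D" and OG: "\<Gamma> \<in> Ob D" using h hom_ObX hom_ObY by auto
  have nG: "\<not> SI \<Gamma>" using False SI_pre[OF h] by blast
  note pp = PP[OF OX OG False nG]
  have iX: "idm D X \<in> hom D X X" using id_hom[OF OX] .
  have t: "tup D (idm D X) h \<in> hom D X (prd D X \<Gamma>)" using iX h by (rule tup_hom)
  have OY: "prd D X \<Gamma> \<in> Ob D" using OX OG by (rule prd_Ob)
  have q1: "pr1 D X \<Gamma> \<in> hom D (prd D X \<Gamma>) X" and q2: "pr2 D X \<Gamma> \<in> hom D (prd D X \<Gamma>) \<Gamma>" using OX OG by (auto intro: pr1_hom pr2_hom)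
  have btG: "bt \<Gamma> \<in> Pc D \<Gamma>" and btX: "bt X \<in> Pc D X" and btY: "bt (prd D X \<Gamma>) \<in> Pc D (prd D X \<Gamma>)" using bt_Pc OX OG OY by auto
  have 1: "rei D h (bt \<Gamma>) = rei D (tup D (idm D X) h) (bt (prd D X \<Gamma>))"
    using rei_comp[OF t q2 btG] pr2_tup[OF iX h] pp by simp
  have 2: "rei D (tup D (idm D X) h) (rei D (pr1 D X \<Gamma>) (bt X)) = bt X"
    using rei_comp[OF t q1 btX] pr1_tup[OF iX h] rei_id[OF OX btX] by simp
  have "le D X (rei D h (bt \<Gamma>)) (bt X)"
    using rei_mono[OF t btY rei_Pc[OF q1 btX] bt_le[OF OY rei_Pc[OF q1 btX]]] 1 2 by simp
  then show ?thesis using le_antisym[OF OX rei_Pc[OF h btG] btX _ bt_le[OF OX rei_Pc[OF h btG]]] by blast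
qed

definition "Good f L \<longleftrightarrow> left_adjoint D f L \<and>
   (\<forall>\<psi>\<in>Pc D (dom D f). (\<exists>s\<in>hom D (cod D f) (dom D f). cmp D f s = idm D (cod D f) \<and> L \<psi> = rei D s \<psi>)
        \<or> L \<psi> = bt (cod D f))"

lemma proj_hom: assumes "is_proj D f" shows "f \<in> hom D (dom D f) (cod D f)"
  using assms pr1_hom pr2_hom unfolding is_proj_def hom_def by blast

lemma proj_good: assumes "is_proj D f" shows "\<exists>L. Good f L"
proof -
  obtain A B where O: "A \<in> Ob D" "B \<in> Ob D" and f: "f = pr1 D A B \<or> f = pr2 D A B"
    using assms unfolding is_proj_def by blast
  have OP: "prd D A B \<in> Ob D" using O by (rule prd_Ob)
  have q1: "pr1 D A B \<in> hom D (prd D A B) A" and q2: "pr2 D A B \<in> hom D (prd D A B) B" using O by (auto intro: pr1_hom pr2_hom)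
  show ?thesis
  proof (cases "f = pr1 D A B")
    case True
    have df: "dom D f = prd D A B" "cod D f = A" using True q1 hom_dom hom_cod by auto
    show ?thesis
    proof (cases "stable_initial D B")
      case True
      have SIP: "SI (prd D A B)" using SI_pre[OF q2 stable_SI[OF True]] .
      have "Good f (\<lambda>_. bt A)" unfolding Good_def left_adjoint_def df
      proof (intro conjI ballI)
        fix \<alpha> assume a: "\<alpha> \<in> Pc D (prd D A B)"
        show "bt A \<in> Pc D A" using bt_Pc[OF O(1)] .
        fix \<beta> assume b: "\<beta> \<in> Pc D A"
        have "le D (prd D A B) \<alpha> (rei D f \<beta>)"
          using SI_trivial[OF SIP a] bt_le[OF OP rei_Pc[OF q1 b]] \<open>f = pr1 D A B\<close> by simp
        then show "le D A (bt A) \<beta> = le D (prd D A B) \<alpha> (rei D f \<beta>)" using bt_le[OF O(1) b] by simp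
      qed simp
      then show ?thesis by blast
    next
      case False
      note a = ac_inst[OF O(2) False O(1)]
      have "Good f (Sg1 A B)" unfolding Good_def df
      proof (intro conjI ballI)
        show "left_adjoint D f (Sg1 A B)" using a True by blast
        fix \<psi> assume ps: "\<psi> \<in> Pc D (prd D A B)"
        have e: "e1 A B \<psi> \<in> hom D A B" and eq: "Sg1 A B \<psi> = rei D (tup D (idm D A) (e1 A B \<psi>)) \<psi>" using a ps by auto
        have iA: "idm D A \<in> hom D A A" using id_hom[OF O(1)] .
        show "(\<exists>s\<in>hom D A (prd D A B). cmp D f s = idm D A \<and> Sg1 A B \<psi> = rei D s \<psi>) \<or> Sg1 A B \<psi> = bt A"
          using tup_hom[OF iA e] pr1_tup[OF iA e] eq True by blast
      qed
      then show ?thesis by blast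
    qed
  next
    case False
    then have fe: "f = pr2 D A B" using f by blast
    have df: "dom D f = prd D A B" "cod D f = B" using fe q2 hom_dom hom_cod by auto
    show ?thesis
    proof (cases "stable_initial D A")
      case True
      have SIP: "SI (prd D A B)" using SI_pre[OF q1 stable_SI[OF True]] .
      have "Good f (\<lambda>_. bt B)" unfolding Good_def left_adjoint_def df
      proof (intro conjI ballI)
        fix \<alpha> assume a: "\<alpha> \<in> Pc D (prd D A B)"
        show "bt B \<in> Pc D B" using bt_Pc[OF O(2)] .
        fix \<beta> assume b: "\<beta> \<in> Pc D B"
        have "le D (prd D A B) \<alpha> (rei D f \<beta>)"
          using SI_trivial[OF SIP a] bt_le[OF OP rei_Pc[OF q2 b]] fe by simp
        then show "le D B (bt B) \<beta> = le D (prd D A B) \<alpha> (rei D f \<beta>)" using bt_le[OF O(2) b] by simp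
      qed simp
      then show ?thesis by blast
    next
      case False
      note a = ac_inst[OF O(1) False O(2)]
      have "Good f (Sg2 A B)" unfolding Good_def df
      proof (intro conjI ballI)
        show "left_adjoint D f (Sg2 A B)" using a fe by blast
        fix \<psi> assume ps: "\<psi> \<in> Pc D (prd D A B)"
        have e: "e2 A B \<psi> \<in> hom D B A" and eq: "Sg2 A B \<psi> = rei D (tup D (e2 A B \<psi>) (idm D B)) \<psi>" using a ps by auto
        have iB: "idm D B \<in> hom D B B" using id_hom[OF O(2)] .
        show "(\<exists>s\<in>hom D B (prd D A B). cmp D f s = idm D B \<and> Sg2 A B \<psi> = rei D s \<psi>) \<or> Sg2 A B \<psi> = bt B"
          using tup_hom[OF e iB] pr2_tup[OF e iB] eq fe by blast
      qed
      then show ?thesis by blast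
    qed
  qed
qed

definition "SgE f = (SOME L. Good f L)"

lemma SgE_good: "is_proj D f \<Longrightarrow> Good f (SgE f)"
  unfolding SgE_def using proj_good someI_ex by metis

lemma SgE_la: "is_proj D f \<Longrightarrow> left_adjoint D f (SgE f)"
  using SgE_good unfolding Good_def by blast

lemma BC: assumes pf: "is_proj D f" and pg: "is_proj D g" and pb: "is_pullback D h g f k"
  and c: "\<gamma> \<in> Pc D (dom D f)"
  shows "rei D h (SgE f \<gamma>) = SgE g (rei D k \<gamma>)"
proof -
  define X where "X = cod D g"
  define W where "W = dom D g"
  define Y where "Y = cod D f"
  define Z where "Z = dom D f"
  have pb1: "h \<in> Ar D \<and> g \<in> Ar D \<and> f \<in> Ar D \<and> k \<in> Ar D \<and>
     dom D h = cod D g \<and> dom D f = cod D k \<and> dom D g = dom D k \<and> cod D h = cod D f \<and>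
     cmp D h g = cmp D f k" using pb unfolding is_pullback_def by (elim conjE) (intro conjI)
  have dfk: "dom D f = cod D k" using pb1 by blast
  have hh: "h \<in> hom D X Y" and gh: "g \<in> hom D W X" and fh: "f \<in> hom D Z Y" and kh: "k \<in> hom D W Z"
    and sq: "cmp D h g = cmp D f k"
    using pb1 unfolding X_def W_def Y_def Z_def hom_def by auto
  have univ: "\<forall>V\<in>Ob D. \<forall>u\<in>hom D V X. \<forall>v\<in>hom D V Z. cmp D h u = cmp D f v \<longrightarrow>
        (\<exists>!w. w \<in> hom D V W \<and> cmp D g w = u \<and> cmp D k w = v)"
    unfolding X_def W_def Z_def dfk using pb unfolding is_pullback_def by (elim conjE)
  have OX: "X \<in> Ob D" and OY: "Y \<in> Ob D" and OW: "W \<in> Ob D" using hh gh hom_ObX hom_ObY by auto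
  have laf: "left_adjoint D f (SgE f)" using SgE_la[OF pf] .
  have lag: "left_adjoint D g (SgE g)" using SgE_la[OF pg] .
  have gf: "Good f (SgE f)" using SgE_good[OF pf] .
  have cZ: "\<gamma> \<in> Pc D Z" using c unfolding Z_def .
  have Lf: "SgE f \<gamma> \<in> Pc D Y" using la_use(1)[OF laf fh cZ] .
  have kc: "rei D k \<gamma> \<in> Pc D W" using rei_Pc[OF kh cZ] .
  have Lg: "SgE g (rei D k \<gamma>) \<in> Pc D X" using la_use(1)[OF lag gh kc] .
  have hL: "rei D h (SgE f \<gamma>) \<in> Pc D X" using rei_Pc[OF hh Lf] .
  have ge: "le D X (SgE g (rei D k \<gamma>)) (rei D h (SgE f \<gamma>))"
  proof -
    have "le D W (rei D k \<gamma>) (rei D k (rei D f (SgE f \<gamma>)))"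
      using rei_mono[OF kh cZ rei_Pc[OF fh Lf] la_unit[OF laf fh cZ]] .
    also have "rei D k (rei D f (SgE f \<gamma>)) = rei D g (rei D h (SgE f \<gamma>))"
      using rei_comp[OF kh fh Lf] rei_comp[OF gh hh Lf] sq by simp
    finally have "le D W (rei D k \<gamma>) (rei D g (rei D h (SgE f \<gamma>)))" .
    then show ?thesis using la_use(2)[OF lag gh kc hL] by blast
  qed
  have le: "le D X (rei D h (SgE f \<gamma>)) (SgE g (rei D k \<gamma>))"
  proof -
    have "(\<exists>s\<in>hom D Y Z. cmp D f s = idm D Y \<and> SgE f \<gamma> = rei D s \<gamma>) \<or> SgE f \<gamma> = bt Y"
      using gf cZ unfolding Good_def Y_def Z_def by blast
    then show ?thesis
    proof
      assume "SgE f \<gamma> = bt Y"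
      then have "rei D h (SgE f \<gamma>) = bt X" using BP[OF hh] by simp
      then show ?thesis using bt_le[OF OX Lg] by simp
    next
      assume "\<exists>s\<in>hom D Y Z. cmp D f s = idm D Y \<and> SgE f \<gamma> = rei D s \<gamma>"
      then obtain s where s: "s \<in> hom D Y Z" "cmp D f s = idm D Y" "SgE f \<gamma> = rei D s \<gamma>" by blast
      have iX: "idm D X \<in> hom D X X" using id_hom[OF OX] .
      have sh: "cmp D s h \<in> hom D X Z" using comp_hom[OF hh s(1)] .
      have "cmp D f (cmp D s h) = h" using assoc[OF hh s(1) fh] s(2) id_l[OF hh] by simp
      then have "cmp D h (idm D X) = cmp D f (cmp D s h)" using id_r[OF hh] by simp
      then have "\<exists>!w. w \<in> hom D X W \<and> cmp D g w = idm D X \<and> cmp D k w = cmp D s h"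
        using univ OX iX sh by blast
      then obtain w where w: "w \<in> hom D X W" "cmp D g w = idm D X" "cmp D k w = cmp D s h"
        by (elim ex1E conjE)
      have "rei D h (SgE f \<gamma>) = rei D w (rei D k \<gamma>)"
        using s(3) rei_comp[OF hh s(1) cZ] rei_comp[OF w(1) kh cZ] w(3) by simp
      then show ?thesis using la_sec[OF lag gh kc w(1,2)] by simp
    qed
  qed
  show ?thesis using le_antisym[OF OX hL Lg le ge] .
qed

lemma Frob: assumes pf: "is_proj D f" and a: "\<alpha> \<in> Pc D (dom D f)" and b: "\<beta> \<in> Pc D (cod D f)"
  shows "SgE f (mt (dom D f) \<alpha> (rei D f \<beta>)) = mt (cod D f) \<beta> (SgE f \<alpha>)"
proof -
  define Y where "Y = cod D f"
  define Z where "Z = dom D f"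
  have fh: "f \<in> hom D Z Y" using proj_hom[OF pf] unfolding Y_def Z_def .
  have OY: "Y \<in> Ob D" and OZ: "Z \<in> Ob D" using fh hom_ObX hom_ObY by auto
  have la: "left_adjoint D f (SgE f)" using SgE_la[OF pf] .
  have gf: "Good f (SgE f)" using SgE_good[OF pf] .
  have aZ: "\<alpha> \<in> Pc D Z" using a unfolding Z_def .
  have bY: "\<beta> \<in> Pc D Y" using b unfolding Y_def .
  have fb: "rei D f \<beta> \<in> Pc D Z" using rei_Pc[OF fh bY] .
  define a' where "a' = mt Z \<alpha> (rei D f \<beta>)"
  have a'P: "a' \<in> Pc D Z" unfolding a'_def using mt_Pc[OF OZ aZ fb] .
  have La: "SgE f \<alpha> \<in> Pc D Y" using la_use(1)[OF la fh aZ] .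
  have La': "SgE f a' \<in> Pc D Y" using la_use(1)[OF la fh a'P] .
  have mP: "mt Y \<beta> (SgE f \<alpha>) \<in> Pc D Y" using mt_Pc[OF OY bY La] .
  have le1: "le D Y (SgE f a') \<beta>"
    using la_use(2)[OF la fh a'P bY] mt_le2[OF OZ aZ fb] unfolding a'_def by blast
  have a'a: "le D Z a' \<alpha>" unfolding a'_def using mt_le1[OF OZ aZ fb] .
  have le2: "le D Y (SgE f a') (SgE f \<alpha>)"
    using la_mono[OF la fh a'P aZ a'a] .
  have L: "le D Y (SgE f a') (mt Y \<beta> (SgE f \<alpha>))" using mt_glb[OF OY bY La La' le1 le2] .
  have R: "le D Y (mt Y \<beta> (SgE f \<alpha>)) (SgE f a')"
  proof -
    have "(\<exists>s\<in>hom D Y Z. cmp D f s = idm D Y \<and> SgE f \<alpha> = rei D s \<alpha>) \<or> SgE f \<alpha> = bt Y"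
      using gf aZ unfolding Good_def Y_def Z_def by blast
    then show ?thesis
    proof
      assume "SgE f \<alpha> = bt Y"
      then have "le D Y (mt Y \<beta> (SgE f \<alpha>)) (bt Y)" using mt_le2[OF OY bY La] by simp
      then show ?thesis using le_trans[OF OY mP bt_Pc[OF OY] La' _ bt_le[OF OY La']] by blast
    next
      assume "\<exists>s\<in>hom D Y Z. cmp D f s = idm D Y \<and> SgE f \<alpha> = rei D s \<alpha>"
      then obtain s where s: "s \<in> hom D Y Z" "cmp D f s = idm D Y" "SgE f \<alpha> = rei D s \<alpha>" by blast
      have sfb: "rei D s (rei D f \<beta>) = \<beta>" using rei_comp[OF s(1) fh bY] s(2) rei_id[OF OY bY] by simp
      have m2: "mt Z (rei D f \<beta>) \<alpha> \<in> Pc D Z" using mt_Pc[OF OZ fb aZ] .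
      have eq: "mt Y \<beta> (SgE f \<alpha>) = rei D s (mt Z (rei D f \<beta>) \<alpha>)"
        using rei_mt[OF s(1) fb aZ] sfb s(3) by simp
      have 1: "le D Y (rei D s (mt Z (rei D f \<beta>) \<alpha>)) (SgE f (mt Z (rei D f \<beta>) \<alpha>))"
        using la_sec[OF la fh m2 s(1,2)] .
      have sw: "le D Z (mt Z (rei D f \<beta>) \<alpha>) a'" unfolding a'_def
        using mt_glb[OF OZ aZ fb m2 mt_le2[OF OZ fb aZ] mt_le1[OF OZ fb aZ]] .
      have 2: "le D Y (SgE f (mt Z (rei D f \<beta>) \<alpha>)) (SgE f a')" using la_mono[OF la fh m2 a'P sw] .
      show ?thesis using le_trans[OF OY mP la_use(1)[OF la fh m2] La' _ 2] 1 eq by simp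
    qed
  qed
  show ?thesis using le_antisym[OF OY La' mP L R] unfolding a'_def Y_def Z_def .
qed

lemma existential: "existential D"
proof -
  have 1: "\<forall>f. is_proj D f \<longrightarrow> left_adjoint D f (SgE f)" using SgE_la by blast
  have 2: "\<forall>f g h k. is_proj D f \<and> is_proj D g \<and> is_pullback D h g f k \<longrightarrow>
        (\<forall>\<gamma>\<in>Pc D (dom D f). rei D h (SgE f \<gamma>) = SgE g (rei D k \<gamma>))"
    by (intro allI impI ballI, elim conjE) (rule BC)
  have 3: "\<forall>f. is_proj D f \<longrightarrow> (\<forall>\<alpha>\<in>Pc D (dom D f). \<forall>\<beta>\<in>Pc D (cod D f).
        SgE f (mt (dom D f) \<alpha> (rei D f \<beta>)) = mt (cod D f) \<beta> (SgE f \<alpha>))"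
    by (intro allI impI ballI) (rule Frob)
  show ?thesis unfolding existential_def
    by (rule exI[of _ mt], rule exI[of _ SgE]) (intro conjI prim 1 2 3)
qed

end

lemma eaco_existential: assumes "eaco D" shows "existential D"
proof -
  obtain mt dl bt co cc Sg1 Sg2 e1 e2 where
    h: "elementary_with D mt dl" "cocomp_with D bt co cc" "full_cocomp D co cc"
     "AC_with D Sg1 Sg2 e1 e2"
     "\<forall>X\<in>Ob D. \<forall>A\<in>Ob D. \<forall>f\<in>hom D X A. \<forall>\<alpha>\<in>Pc D A.
        let O1 = co A \<alpha>; c1 = cc A \<alpha>;
            O2 = co X (rei D f \<alpha>); c2 = cc X (rei D f \<alpha>)
        in \<not> stable_initial D O1 \<and> \<not> stable_initial D O2 \<longrightarrow>
           rei D f (rei D (tup D (e2 O1 A (graph D dl c1)) (idm D A)) (graph D dl c1))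
             = rei D (tup D (e2 O2 X (graph D dl c2)) (idm D X)) (graph D dl c2)"
    using assms unfolding eaco_def by blast
  have "has_finite_products D" using h(1)
    unfolding elementary_with_def primary_with_def doctrine_def by blast
  then interpret eac D mt dl bt co cc Sg1 Sg2 e1 e2
    using h by (intro eac.intro fp.intro eac_axioms.intro) assumption+
  show ?thesis by (rule existential)
qed

theorem mainTheorem11:
  fixes D :: "('o,'m,'p) doctrine"
  assumes "eaco D"
  shows "existential D"
  using assms by (rule eaco_existential)

end
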